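(* Let $\mathcal{M}_{\hat A'\hat B'\to\hat A\hat B}$ be a bipartite quantum channel and $\Theta^{\mathrm{PPT}}$ a completely-PPT-preserving superchannel, $\Theta^{\mathrm{PPT}}(\mathcal{M})=\mathcal{P}^{\mathrm{post}}_{A_M\hat A\hat BB_M\to AB}\circ\mathcal{M}\circ\mathcal{P}^{\mathrm{pre}}_{A'B'\to\hat A'\hat B'A_MB_M}$ with $\mathcal{P}^{\mathrm{pre}},\mathcal{P}^{\mathrm{post}}$ completely PPT-preserving channels. Then $$E_\kappa(\mathcal{M})\ge E_\kappa(\Theta^{\mathrm{PPT}}(\mathcal{M})).$$
   Context: $T_X$ is partial transpose on $X$. For a bipartite channel $\mathcal{N}_{A'B'\to AB}$ (Alice: $A',A$; Bob: $B',B$), its Choi operator is $J^{\mathcal{N}}_{L_AABL_B}=\mathcal{N}(|\Upsilon\rangle\langle\Upsilon|_{L_AA'}\otimes|\Upsilon\rangle\langle\Upsilon|_{B'L_B})$ with $|\Upsilon\rangle_{XY}=\sum_i|i\rangle_X|i\rangle_Y$, $L_A\simeq A'$, $L_B\simeq B'$. The $\kappa$-entanglement of $\mathcal{N}$ is $E_\kappa(\mathcal{N})=\log\Gamma_\kappa(\mathcal{N})$, where $\Gamma_\kappa(\mathcal{N})=\inf\{\|\operatorname{Tr}_{AB}Q_{L_AABL_B}\|_\infty: Q_{L_AABL_B}\ge0,\ -T_{BL_B}(Q_{L_AABL_B})\le T_{BL_B}(J^{\mathcal{N}}_{L_AABL_B})\le T_{BL_B}(Q_{L_AABL_B})\}$.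 A bipartite channel is completely PPT-preserving if conjugating it with partial transposes on Bob's input and output systems gives a completely positive map. In the superchannel, Alice holds $A',\hat A',A_M,\hat A,A$; Bob holds $B',\hat B',B_M,\hat B,B$. *)

theory Defs
  imports Complex_Main
begin

text \<open>Finite-dimensional quantum systems are modelled by finite index types.
  An operator on the Hilbert space with orthonormal basis indexed by 'i is a
  matrix 'i \<Rightarrow> 'i \<Rightarrow> complex.  Composite systems are product types
  (tensor product), so a bipartite operator on A \<otimes> B has index type 'a \<times> 'b.\<close>

type_synonym 'i op = "'i \<Rightarrow> 'i \<Rightarrow> complex"

definition trace_op :: "('i::finite) op \<Rightarrow> complex" where
  "trace_op X = (\<Sum>i\<in>UNIV. X i i)"

definition psd :: "('i::finite) op \<Rightarrow> bool" where
  "psd X \<longleftrightarrow> (\<forall>v :: 'i \<Rightarrow> complex.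
      Im (\<Sum>i\<in>UNIV. \<Sum>j\<in>UNIV. cnj (v i) * X i j * v j) = 0 \<and>
      Re (\<Sum>i\<in>UNIV. \<Sum>j\<in>UNIV. cnj (v i) * X i j * v j) \<ge> 0)"

definition op_le :: "('i::finite) op \<Rightarrow> 'i op \<Rightarrow> bool" where
  "op_le X Y \<longleftrightarrow> psd (\<lambda>i j. Y i j - X i j)"

definition op_uminus :: "'i op \<Rightarrow> 'i op" where
  "op_uminus X = (\<lambda>i j. - X i j)"

definition vec_norm :: "(('i::finite) \<Rightarrow> complex) \<Rightarrow> real" where
  "vec_norm v = sqrt (\<Sum>i\<in>UNIV. (cmod (v i))\<^sup>2)"

definition op_apply :: "('i::finite) op \<Rightarrow> ('i \<Rightarrow> complex) \<Rightarrow> ('i \<Rightarrow> complex)" where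
  "op_apply X v = (\<lambda>i. \<Sum>j\<in>UNIV. X i j * v j)"

definition op_norm_inf :: "('i::finite) op \<Rightarrow> real" where
  "op_norm_inf X = Sup {vec_norm (op_apply X v) | v. vec_norm v \<le> 1}"

definition ptrans2 :: "('x \<times> 'y) op \<Rightarrow> ('x \<times> 'y) op" where
  "ptrans2 X = (\<lambda>(x,y) (x',y'). X (x,y') (x',y))"

definition lin_map :: "('i op \<Rightarrow> 'o op) \<Rightarrow> bool" where
  "lin_map N \<longleftrightarrow>
     (\<forall>X Y. N (\<lambda>i j. X i j + Y i j) = (\<lambda>p q. N X p q + N Y p q)) \<and>
     (\<forall>c X. N (\<lambda>i j. c * X i j) = (\<lambda>p q. c * N X p q))"

text \<open>N \<otimes> id_R for a reference system R (block-wise application of N).\<close>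
definition ext_id :: "('i op \<Rightarrow> 'o op) \<Rightarrow> ('i \<times> 'r) op \<Rightarrow> ('o \<times> 'r) op" where
  "ext_id N X = (\<lambda>(p,r) (q,r'). N (\<lambda>i i'. X (i,r) (i',r')) p q)"

text \<open>Complete positivity: N \<otimes> id_R is positive, with R a copy of the input
  system (equivalent to positivity for all reference dimensions).\<close>
definition compl_pos :: "(('i::finite) op \<Rightarrow> ('o::finite) op) \<Rightarrow> bool" where
  "compl_pos N \<longleftrightarrow> (\<forall>X :: ('i \<times> 'i) op. psd X \<longrightarrow> psd (ext_id N X))"

definition trace_pres :: "(('i::finite) op \<Rightarrow> ('o::finite) op) \<Rightarrow> bool" where
  "trace_pres N \<longleftrightarrow> (\<forall>X. trace_op (N X) = trace_op X)"

definition qchannel :: "(('i::finite) op \<Rightarrow> ('o::finite) op) \<Rightarrow> bool" where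
  "qchannel N \<longleftrightarrow> lin_map N \<and> compl_pos N \<and> trace_pres N"

definition cppt_pres ::
  "((('ai::finite) \<times> ('bi::finite)) op \<Rightarrow> (('ao::finite) \<times> ('bo::finite)) op) \<Rightarrow> bool" where
  "cppt_pres N \<longleftrightarrow> qchannel N \<and> compl_pos (\<lambda>X. ptrans2 (N (ptrans2 X)))"

text \<open>Choi operator J_{L_A A B L_B} of a bipartite channel N_{A'B' \<rightarrow> AB},
  with L_A \<simeq> A', L_B \<simeq> B'; index ((l_A, a), (b, l_B)).\<close>
definition choi_bip ::
  "(('ai \<times> 'bi) op \<Rightarrow> ('ao \<times> 'bo) op) \<Rightarrow> (('ai \<times> 'ao) \<times> ('bo \<times> 'bi)) op" where
  "choi_bip N = (\<lambda>((l,a),(b,m)) ((l',a'),(b',m')).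
      N (\<lambda>(x,y) (x',y'). (if x = l \<and> x' = l' \<and> y = m \<and> y' = m' then 1 else 0))
        (a,b) (a',b'))"

definition ptrace_AB ::
  "((('la::finite) \<times> ('a::finite)) \<times> (('b::finite) \<times> ('lb::finite))) op \<Rightarrow> ('la \<times> 'lb) op" where
  "ptrace_AB Q = (\<lambda>(l,m) (l',m'). \<Sum>a\<in>UNIV. \<Sum>b\<in>UNIV. Q ((l,a),(b,m)) ((l',a),(b,m')))"

definition Gamma_kappa ::
  "((('ai::finite) \<times> ('bi::finite)) op \<Rightarrow> (('ao::finite) \<times> ('bo::finite)) op) \<Rightarrow> real" where
  "Gamma_kappa N = Inf {op_norm_inf (ptrace_AB Q) | Q.
      psd Q \<and>
      op_le (op_uminus (ptrans2 Q)) (ptrans2 (choi_bip N)) \<and>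
      op_le (ptrans2 (choi_bip N)) (ptrans2 Q)}"

definition E_kappa ::
  "((('ai::finite) \<times> ('bi::finite)) op \<Rightarrow> (('ao::finite) \<times> ('bo::finite)) op) \<Rightarrow> real" where
  "E_kappa N = log 2 (Gamma_kappa N)"

definition mid_ext ::
  "(('ahi \<times> 'bhi) op \<Rightarrow> ('aho \<times> 'bho) op) \<Rightarrow>
   (('ahi \<times> 'am) \<times> ('bhi \<times> 'bm)) op \<Rightarrow> (('am \<times> 'aho) \<times> ('bho \<times> 'bm)) op" where
  "mid_ext M X = (\<lambda>((m,h),(g,n)) ((m',h'),(g',n')).
      M (\<lambda>(x,y) (x',y'). X ((x,m),(y,n)) ((x',m'),(y',n'))) (h,g) (h',g'))"

definition superch ::
  "(('ai \<times> 'bi) op \<Rightarrow> (('ahi \<times> 'am) \<times> ('bhi \<times> 'bm)) op) \<Rightarrow>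
   ((('am \<times> 'aho) \<times> ('bho \<times> 'bm)) op \<Rightarrow> ('ao \<times> 'bo) op) \<Rightarrow>
   (('ahi \<times> 'bhi) op \<Rightarrow> ('aho \<times> 'bho) op) \<Rightarrow> (('ai \<times> 'bi) op \<Rightarrow> ('ao \<times> 'bo) op)" where
  "superch Ppre Ppost M = (\<lambda>X. Ppost (mid_ext M (Ppre X)))"

end

theory Submission
  imports Defs "HOL-Library.Complex_Order"
begin


definition bf :: "('i::finite) op \<Rightarrow> ('i \<Rightarrow> complex) \<Rightarrow> ('i \<Rightarrow> complex) \<Rightarrow> complex" where
  "bf X x y = (\<Sum>i\<in>UNIV. \<Sum>j\<in>UNIV. cnj (x i) * X i j * y j)"

lemma psd_iff: "psd X \<longleftrightarrow> (\<forall>v. 0 \<le> bf X v v)"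
  by (auto simp: psd_def bf_def less_eq_complex_def)

lemma bf_add_scale:
  fixes X :: "('i::finite) op"
  shows "bf X (\<lambda>i. x i + t * y i) (\<lambda>i. x i + t * y i) =
    bf X x x + t * bf X x y + cnj t * bf X y x + t * cnj t * bf X y y"
  unfolding bf_def
  by (simp add: algebra_simps sum.distrib sum_distrib_left)

definition herm :: "('i::finite) op \<Rightarrow> bool" where
  "herm X \<longleftrightarrow> (\<forall>i j. X j i = cnj (X i j))"

lemma bf_herm_swap:
  assumes "herm X" shows "bf X y x = cnj (bf X x y)"
proof -
  have hc: "cnj (X i j) = X j i" for i j using assms unfolding herm_def by (metis complex_cnj_cnj)
  have "cnj (bf X x y) = (\<Sum>i\<in>UNIV. \<Sum>j\<in>UNIV. x i * X j i * cnj (y j))"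
    unfolding bf_def cnj_sum by (simp add: hc)
  also have "\<dots> = (\<Sum>j\<in>UNIV. \<Sum>i\<in>UNIV. x i * X j i * cnj (y j))" by (rule sum.swap)
  also have "\<dots> = bf X y x" unfolding bf_def by (simp add: mult_ac)
  finally show ?thesis by simp
qed

lemma if10_simps[simp]:
  "cnj (if P then 1 else 0) = (if P then 1 else 0)"
  "cnj (if P then x else 0) = (if P then cnj x else 0)"
  "(if P then 1 else 0) * (x::complex) = (if P then x else 0)"
  "(x::complex) * (if P then 1 else 0) = (if P then x else 0)"
  "(if P then (x::complex) else 0) * y = (if P then x * y else 0)"
  "y * (if P then (x::complex) else 0) = (if P then y * x else 0)"
  by auto

lemma if_conj_split: "(if P \<and> Q then x else 0) = (if P then (if Q then x else 0) else 0)"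
  by simp

lemma sum_if_const[simp]: "(\<Sum>j\<in>A. if P then f j else 0) = (if P then sum f A else 0)"
  by auto

definition dl :: "'i \<Rightarrow> 'i \<Rightarrow> complex" where
  "dl k = (\<lambda>i. if i = k then 1 else 0)"

lemma bf_dl_dl[simp]: "bf X (dl i) (dl j) = X i j"
  by (simp add: bf_def dl_def)

lemma bf_dl_left: "bf X (dl i) y = (\<Sum>j\<in>UNIV. X i j * y j)"
  by (simp add: bf_def dl_def)

lemma psd_bf_nonneg: "psd X \<Longrightarrow> 0 \<le> bf X v v"
  by (simp add: psd_iff)

lemma psd_bf_Im: "psd X \<Longrightarrow> Im (bf X v v) = 0"
  using psd_bf_nonneg[of X v] by (simp add: less_eq_complex_def)

lemma psd_bf_Re: "psd X \<Longrightarrow> Re (bf X v v) \<ge> 0"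
  using psd_bf_nonneg[of X v] by (simp add: less_eq_complex_def)

lemma psd_herm:
  assumes "psd X" shows "herm X"
  unfolding herm_def
proof (intro allI)
  fix i j
  have d: "Im (X k k) = 0" for k using psd_bf_Im[OF assms, of "dl k"] by simp
  have e: "Im (X i i + t * X i j + cnj t * X j i + t * cnj t * X j j) = 0" for t
    using psd_bf_Im[OF assms, of "\<lambda>k. dl i k + t * dl j k"] bf_add_scale[of X "dl i" t "dl j"]
    by simp
  have e1: "Im (X i j) + Im (X j i) = 0" using e[of 1] d[of i] d[of j] by simp
  have e2: "Re (X i j) - Re (X j i) = 0" using e[of \<i>] d[of i] d[of j] by simp
  show "X j i = cnj (X i j)" using e1 e2 by (simp add: complex_eq_iff)
qed

lemma psd_bf_swap: "psd X \<Longrightarrow> bf X y x = cnj (bf X x y)"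
  by (rule bf_herm_swap[OF psd_herm])

lemma psd_bf_real: "psd X \<Longrightarrow> bf X v v = complex_of_real (Re (bf X v v))"
  using psd_bf_Im[of X v] by (simp add: complex_eq_iff)

lemma psd_CS:
  assumes "psd X"
  shows "(cmod (bf X x y))\<^sup>2 \<le> Re (bf X x x) * Re (bf X y y)"
proof -
  define a where "a = Re (bf X x x)"
  define b where "b = Re (bf X y y)"
  define g where "g = bf X x y"
  have a0: "a \<ge> 0" using psd_bf_Re[OF assms] a_def by simp
  have b0: "b \<ge> 0" using psd_bf_Re[OF assms] b_def by simp
  have key: "0 \<le> a + 2 * Re (t * g) + (cmod t)\<^sup>2 * b" for t
  proof -
    have "0 \<le> Re (bf X (\<lambda>i. x i + t * y i) (\<lambda>i. x i + t * y i))"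
      using psd_bf_Re[OF assms] by blast
    also have "bf X (\<lambda>i. x i + t * y i) (\<lambda>i. x i + t * y i) =
        bf X x x + t * g + cnj t * cnj g + t * cnj t * bf X y y"
      using bf_add_scale[of X x t y] psd_bf_swap[OF assms, of y x] g_def by simp
    also have "Re \<dots> = a + 2 * Re (t * g) + (cmod t)\<^sup>2 * b"
    proof -
      have tt: "t * cnj t = complex_of_real ((cmod t)\<^sup>2)" using complex_norm_square[of t] by simp
      have "Re (t * g) + Re (cnj t * cnj g) = 2 * Re (t * g)" by simp
      then show ?thesis using psd_bf_Im[OF assms, of y] a_def b_def tt
        by (simp only: plus_complex.sel) simp
    qed
    finally show ?thesis .
  qed
  have cg: "cnj g * g = complex_of_real ((cmod g)\<^sup>2)"
    using complex_norm_square[of g] by (simp add: mult.commute)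
  show ?thesis
  proof (cases "b = 0")
    case True
    show ?thesis
    proof (rule ccontr)
      assume "\<not> ?thesis"
      then have gp: "(cmod g)\<^sup>2 > 0" using True g_def b_def by (metis mult_zero_right not_le)
      define r where "r = (a + 1) / (2 * (cmod g)\<^sup>2)"
      have "0 \<le> a + 2 * Re (complex_of_real (- r) * cnj g * g)"
        using key[of "complex_of_real (-r) * cnj g"] True by (simp add: mult.assoc)
      also have "Re (complex_of_real (- r) * cnj g * g) = - r * (cmod g)\<^sup>2"
        by (simp only: mult.assoc cg) simp
      also have "a + 2 * (- r * (cmod g)\<^sup>2) = -1" using gp unfolding r_def by (simp add: field_simps)
      finally show False by simp
    qed
  next
    case False
    then have bp: "b > 0" using b0 by simp
    have "0 \<le> a + 2 * Re (complex_of_real (- 1 / b) * cnj g * g) + (cmod (complex_of_real (- 1 / b) * cnj g))\<^sup>2 * b"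
      using key by blast
    also have "Re (complex_of_real (- 1 / b) * cnj g * g) = - (cmod g)\<^sup>2 / b"
      by (simp only: mult.assoc cg) simp
    also have "(cmod (complex_of_real (- 1 / b) * cnj g))\<^sup>2 * b = (cmod g)\<^sup>2 / b"
    proof -
      have "cmod (complex_of_real (- 1 / b) * cnj g) = cmod g / b"
        by (simp only: norm_mult norm_of_real complex_mod_cnj) (simp add: bp abs_of_pos)
      then show ?thesis using bp by (simp add: power2_eq_square)
    qed
    finally have "0 \<le> a - (cmod g)\<^sup>2 / b" by simp
    then have "(cmod g)\<^sup>2 / b \<le> a" by simp
    then have "(cmod g)\<^sup>2 \<le> a * b" using bp by (simp add: pos_divide_le_eq)
    then show ?thesis unfolding g_def a_def b_def .
  qed
qed

lemma bf_rank1: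
  "bf (\<lambda>i j. v i * cnj (v j)) w w = cnj (\<Sum>j\<in>UNIV. cnj (v j) * w j) * (\<Sum>j\<in>UNIV. cnj (v j) * w j)"
  unfolding bf_def cnj_sum sum_product
  by (intro sum.cong refl) (simp add: mult_ac)

lemma bf_diff: "bf (\<lambda>i j. X i j - Y i j) w w = bf X w w - bf Y w w"
  unfolding bf_def by (simp add: algebra_simps sum_subtractf)

lemma bf_minus_rank1:
  fixes C :: "('i::finite) op"
  shows "bf (\<lambda>i j. C i j - v i * cnj (v j)) w w =
     bf C w w - cnj (\<Sum>j\<in>UNIV. cnj (v j) * w j) * (\<Sum>j\<in>UNIV. cnj (v j) * w j)"
  using bf_diff[of C "\<lambda>i j. v i * cnj (v j)" w] bf_rank1[of v w] by simp

lemma psd_decomp_aux: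
  fixes S :: "('i::finite) set"
  assumes "finite S"
  shows "\<forall>C :: 'i op. psd C \<and> (\<forall>i j. i \<notin> S \<longrightarrow> C i j = 0) \<longrightarrow>
    (\<exists>V. (\<forall>k. k \<notin> S \<longrightarrow> V k = (\<lambda>_. 0)) \<and> (\<forall>i j. C i j = (\<Sum>k\<in>UNIV. V k i * cnj (V k j))))"
  using assms
proof (induction S rule: finite_induct)
  case empty
  show ?case by (intro allI impI exI[of _ "\<lambda>_ _. 0"]) auto
next
  case (insert k S)
  show ?case
  proof (intro allI impI)
    fix C :: "'i op"
    assume A: "psd C \<and> (\<forall>i j. i \<notin> insert k S \<longrightarrow> C i j = 0)"
    then have P: "psd C" and Z: "\<And>i j. i \<notin> insert k S \<Longrightarrow> C i j = 0" by auto
    have H: "C j i = cnj (C i j)" for i j using psd_herm[OF P] unfolding herm_def by blast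
    have Hc: "cnj (C i j) = C j i" for i j using H[of i j] by simp
    define c where "c = Re (C k k)"
    have Ckk: "C k k = complex_of_real c"
      using psd_bf_Im[OF P, of "dl k"] c_def by (simp add: complex_eq_iff)
    have c0: "c \<ge> 0" using psd_bf_Re[OF P, of "dl k"] c_def by simp
    show "\<exists>V. (\<forall>k'. k' \<notin> insert k S \<longrightarrow> V k' = (\<lambda>_. 0)) \<and>
               (\<forall>i j. C i j = (\<Sum>k'\<in>UNIV. V k' i * cnj (V k' j)))"
    proof (cases "c = 0")
      case True
      have row: "C k j = 0" for j
        using psd_CS[OF P, of "dl k" "dl j"] True c_def by simp
      have "\<forall>i j. i \<notin> S \<longrightarrow> C i j = 0"
        using Z row by (metis insert_iff)
      then obtain V where V1: "\<forall>k'. k' \<notin> S \<longrightarrow> V k' = (\<lambda>_. 0)"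
          and V2: "\<forall>i j. C i j = (\<Sum>k'\<in>UNIV. V k' i * cnj (V k' j))"
        using insert.IH P by blast
      show ?thesis using V1 V2 by (intro exI[of _ V]) auto
    next
      case False
      then have cp: "c > 0" using c0 by simp
      define s where "s = complex_of_real (sqrt c)"
      have s0: "s \<noteq> 0" using cp s_def by simp
      have ss: "s * s = complex_of_real c"
        unfolding s_def of_real_mult[symmetric] using cp by simp
      have cs: "cnj s = s" unfolding s_def by simp
      define v where "v = (\<lambda>j. C j k / s)"
      define C' where "C' = (\<lambda>i j. C i j - v i * cnj (v j))"
      have psdC': "psd C'"
        unfolding psd_iff
      proof
        fix w
        define b where "b = bf C (dl k) w"
        have beta: "(\<Sum>j\<in>UNIV. cnj (v j) * w j) = b / s"
          unfolding b_def bf_dl_left v_def using Hc cs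
          by (simp add: sum_divide_distrib)
        have eq: "bf C' w w = bf C w w - cnj b * b / complex_of_real c"
          unfolding C'_def bf_minus_rank1 beta using cs ss
          by (simp add: field_simps)
        have cb: "cnj b * b = complex_of_real ((cmod b)\<^sup>2)"
          using complex_norm_square[of b] by (simp add: mult.commute)
        have CSb: "(cmod b)\<^sup>2 \<le> c * Re (bf C w w)"
          using psd_CS[OF P, of "dl k" w] b_def c_def by simp
        have "Im (bf C' w w) = 0" using eq cb psd_bf_Im[OF P, of w] by simp
        moreover have "Re (bf C' w w) \<ge> 0"
        proof -
          have "Re (bf C' w w) = Re (bf C w w) - (cmod b)\<^sup>2 / c" using eq cb by simp
          moreover have "(cmod b)\<^sup>2 / c \<le> Re (bf C w w)"
            using CSb cp by (simp add: field_simps mult.commute)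
          ultimately show ?thesis by simp
        qed
        ultimately show "0 \<le> bf C' w w" by (simp add: less_eq_complex_def)
      qed
      have rowsC': "\<forall>i j. i \<notin> S \<longrightarrow> C' i j = 0"
      proof (intro allI impI)
        fix i j assume iS: "i \<notin> S"
        show "C' i j = 0"
        proof (cases "i = k")
          case True
          have "v k * cnj (v j) = C k k * cnj (C j k) / (s * s)"
            unfolding v_def using cs by simp
          also have "\<dots> = C k j" using Ckk ss Hc cp by simp
          finally show ?thesis unfolding C'_def True by simp
        next
          case False
          then have "i \<notin> insert k S" using iS by simp
          then show ?thesis unfolding C'_def v_def using Z by simp
        qed
      qed
      obtain V where V1: "\<forall>k'. k' \<notin> S \<longrightarrow> V k' = (\<lambda>_. 0)"
          and V2: "\<forall>i j. C' i j = (\<Sum>k'\<in>UNIV. V k' i * cnj (V k' j))"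
        using insert.IH psdC' rowsC' by blast
      have Vk: "V k = (\<lambda>_. 0)" using V1 insert.hyps(2) by simp
      define V' where "V' = V(k := v)"
      have "C i j = (\<Sum>k'\<in>UNIV. V' k' i * cnj (V' k' j))" for i j
      proof -
        have "(\<Sum>k'\<in>UNIV. V' k' i * cnj (V' k' j)) = v i * cnj (v j) + (\<Sum>k'\<in>UNIV - {k}. V' k' i * cnj (V' k' j))"
          by (simp add: sum.remove[of UNIV k] V'_def)
        also have "(\<Sum>k'\<in>UNIV - {k}. V' k' i * cnj (V' k' j)) = (\<Sum>k'\<in>UNIV - {k}. V k' i * cnj (V k' j))"
          by (rule sum.cong) (auto simp: V'_def)
        also have "\<dots> = (\<Sum>k'\<in>UNIV. V k' i * cnj (V k' j))"
          by (simp add: sum.remove[of UNIV k] Vk)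
        also have "\<dots> = C' i j" using V2 by simp
        finally show ?thesis unfolding C'_def by simp
      qed
      moreover have "\<forall>k'. k' \<notin> insert k S \<longrightarrow> V' k' = (\<lambda>_. 0)" using V1 V'_def by auto
      ultimately show ?thesis by blast
    qed
  qed
qed

lemma psd_decomp:
  fixes C :: "('i::finite) op"
  assumes "psd C"
  shows "\<exists>V :: 'i \<Rightarrow> 'i \<Rightarrow> complex. \<forall>i j. C i j = (\<Sum>k\<in>UNIV. V k i * cnj (V k j))"
proof -
  have a: "psd C \<and> (\<forall>i j. i \<notin> (UNIV::'i set) \<longrightarrow> C i j = 0)" using assms by simp
  have "psd C \<and> (\<forall>i j. i \<notin> (UNIV::'i set) \<longrightarrow> C i j = 0) \<longrightarrow>
    (\<exists>V. (\<forall>k. k \<notin> (UNIV::'i set) \<longrightarrow> V k = (\<lambda>_. 0)) \<and> (\<forall>i j. C i j = (\<Sum>k\<in>UNIV. V k i * cnj (V k j))))"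
    by (rule spec[OF psd_decomp_aux[OF finite_class.finite_UNIV]])
  then obtain V where V: "(\<forall>k. k \<notin> (UNIV::'i set) \<longrightarrow> V k = (\<lambda>_. 0)) \<and> (\<forall>i j. C i j = (\<Sum>k\<in>UNIV. V k i * cnj (V k j)))"
    using a by (elim impE exE)
  show ?thesis by (rule exI[of _ V]) (use V in simp)
qed



lemma sum_pair_UNIV: "(\<Sum>z\<in>(UNIV :: ('a::finite \<times> 'b::finite) set). f z) = (\<Sum>a\<in>UNIV. \<Sum>b\<in>UNIV. f (a,b))"
  by (simp add: sum.cartesian_product)

lemma bf_add: "bf (\<lambda>i j. X i j + Y i j) v v = bf X v v + bf Y v v"
  unfolding bf_def by (simp add: algebra_simps sum.distrib)

lemma bf_sum: "bf (\<lambda>i j. \<Sum>k\<in>K. X k i j) v v = (\<Sum>k\<in>K. bf (X k) v v)"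
  unfolding bf_def by (simp add: sum_distrib_left sum_distrib_right sum.swap[of _ K] algebra_simps)

lemma psd_add: "psd X \<Longrightarrow> psd Y \<Longrightarrow> psd (\<lambda>i j. X i j + Y i j)"
  unfolding psd_iff bf_add by (simp add: add_nonneg_nonneg)

lemma psd_sum: "(\<And>k. k \<in> K \<Longrightarrow> psd (X k)) \<Longrightarrow> psd (\<lambda>i j. \<Sum>k\<in>K. X k i j)"
  unfolding psd_iff bf_sum by (simp add: sum_nonneg)

lemma psd_scale: "0 \<le> r \<Longrightarrow> psd X \<Longrightarrow> psd (\<lambda>i j. complex_of_real r * X i j)"
proof -
  assume r: "0 \<le> r" and X: "psd X"
  have "bf (\<lambda>i j. complex_of_real r * X i j) v v = complex_of_real r * bf X v v" for v
    unfolding bf_def by (simp add: sum_distrib_left algebra_simps)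
  moreover have "0 \<le> complex_of_real r" using r by (simp add: less_eq_complex_def)
  ultimately show ?thesis using X unfolding psd_iff by (simp add: mult_nonneg_nonneg)
qed

lemma sum_assoc_swap:
  "(\<Sum>k\<in>UNIV. a k * (\<Sum>j\<in>UNIV. b k j)) = (\<Sum>j\<in>UNIV. \<Sum>k\<in>UNIV. a k * (b k j :: complex))"
  by (simp add: sum_distrib_left) (rule sum.swap)

lemma psd_cong:
  fixes X :: "('i::finite) op" and T :: "'i \<Rightarrow> ('j::finite) \<Rightarrow> complex"
  assumes "psd X"
  shows "psd (\<lambda>j j'. \<Sum>i\<in>UNIV. \<Sum>i'\<in>UNIV. cnj (T i j) * X i i' * T i' j')"
  unfolding psd_iff
proof
  fix w :: "'j \<Rightarrow> complex"
  define u where "u = (\<lambda>i. \<Sum>j\<in>UNIV. T i j * w j)"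
  have "bf (\<lambda>j j'. \<Sum>i\<in>UNIV. \<Sum>i'\<in>UNIV. cnj (T i j) * X i i' * T i' j') w w = bf X u u"
  proof -
    have "bf (\<lambda>j j'. \<Sum>i\<in>UNIV. \<Sum>i'\<in>UNIV. cnj (T i j) * X i i' * T i' j') w w
       = (\<Sum>j\<in>UNIV. \<Sum>j'\<in>UNIV. \<Sum>i\<in>UNIV. \<Sum>i'\<in>UNIV. cnj (w j) * cnj (T i j) * X i i' * T i' j' * w j')"
      unfolding bf_def by (simp add: sum_distrib_left sum_distrib_right mult.assoc)
    also have "\<dots> = (\<Sum>j\<in>UNIV. \<Sum>i\<in>UNIV. \<Sum>i'\<in>UNIV. \<Sum>j'\<in>UNIV. cnj (w j) * cnj (T i j) * X i i' * T i' j' * w j')"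
      apply (rule sum.cong[OF refl])
      apply (rule trans[OF sum.swap])
      apply (rule sum.cong[OF refl])
      by (rule sum.swap)
    also have "\<dots> = (\<Sum>i\<in>UNIV. \<Sum>i'\<in>UNIV. \<Sum>j\<in>UNIV. \<Sum>j'\<in>UNIV. cnj (w j) * cnj (T i j) * X i i' * T i' j' * w j')"
      apply (rule trans[OF sum.swap])
      apply (rule sum.cong[OF refl])
      by (rule sum.swap)
    also have "\<dots> = bf X u u"
      unfolding bf_def u_def
      apply (simp add: sum_distrib_left sum_distrib_right mult.assoc mult.left_commute cnj_sum)
      apply (rule sum.cong[OF refl])
      apply (rule sum.cong[OF refl])
      apply (rule trans[OF sum.swap])
      by (simp add: ac_simps)
    finally show ?thesis .
  qed
  then show "0 \<le> bf (\<lambda>j j'. \<Sum>i\<in>UNIV. \<Sum>i'\<in>UNIV. cnj (T i j) * X i i' * T i' j') w w"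
    using psd_bf_nonneg[OF assms] by simp
qed

lemma psd_reindex:
  fixes X :: "('i::finite) op" and f :: "('j::finite) \<Rightarrow> 'i"
  assumes "psd X"
  shows "psd (\<lambda>j j'. X (f j) (f j'))"
  using psd_cong[OF assms, of "\<lambda>i j. if i = f j then 1 else 0"] by simp

lemma psd_rank1: "psd (\<lambda>i j. v i * cnj (v j))"
proof -
  have eqw: "bf (\<lambda>i j. v i * cnj (v j)) w w = cnj (\<Sum>j\<in>UNIV. cnj (v j) * w j) * (\<Sum>j\<in>UNIV. cnj (v j) * w j)" for w
    unfolding bf_def cnj_sum sum_product by (simp add: ac_simps)
  then show ?thesis unfolding psd_iff
  proof (intro allI)
    fix w
    define s where "s = (\<Sum>j\<in>UNIV. cnj (v j) * w j)"
    have "cnj s * s = complex_of_real ((cmod s)\<^sup>2)"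
      using complex_norm_square[of s] by (simp add: mult.commute)
    then show "0 \<le> bf (\<lambda>i j. v i * cnj (v j)) w w"
      using eqw[of w] unfolding s_def[symmetric] by (simp add: less_eq_complex_def)
  qed
qed



definition E :: "'i \<Rightarrow> 'i \<Rightarrow> 'i op" where
  "E i i' = (\<lambda>x x'. if x = i \<and> x' = i' then 1 else 0)"

definition kmap :: "('i::finite \<Rightarrow> 'i \<Rightarrow> 'o op) \<Rightarrow> 'i op \<Rightarrow> 'o op" where
  "kmap K X = (\<lambda>p q. \<Sum>i\<in>UNIV. \<Sum>i'\<in>UNIV. X i i' * K i i' p q)"

lemma lin_add: "lin_map N \<Longrightarrow> N (\<lambda>i j. X i j + Y i j) = (\<lambda>p q. N X p q + N Y p q)"
  unfolding lin_map_def by blast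

lemma lin_scale: "lin_map N \<Longrightarrow> N (\<lambda>i j. c * X i j) = (\<lambda>p q. c * N X p q)"
  unfolding lin_map_def by blast

lemma lin_zero: "lin_map N \<Longrightarrow> N (\<lambda>i j. 0) = (\<lambda>p q. 0)"
  using lin_scale[of N 0 "\<lambda>_ _. 0"] by simp

lemma lin_sum:
  assumes "lin_map N" "finite F"
  shows "N (\<lambda>i j. \<Sum>k\<in>F. f k i j) = (\<lambda>p q. \<Sum>k\<in>F. N (f k) p q)"
  using assms(2)
proof (induction F rule: finite_induct)
  case empty
  then show ?case using lin_zero[OF assms(1)] by simp
next
  case (insert x F)
  have "N (\<lambda>i j. \<Sum>k\<in>insert x F. f k i j) = N (\<lambda>i j. f x i j + (\<Sum>k\<in>F. f k i j))"
    using insert.hyps by simp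
  also have "\<dots> = (\<lambda>p q. N (f x) p q + N (\<lambda>i j. \<Sum>k\<in>F. f k i j) p q)"
    using lin_add[OF assms(1), of "f x" "\<lambda>i j. \<Sum>k\<in>F. f k i j"] by simp
  finally show ?case using insert by simp
qed

lemma lin_expand:
  fixes N :: "('i::finite) op \<Rightarrow> 'o op"
  assumes "lin_map N"
  shows "N X = kmap (\<lambda>i i'. N (E i i')) X"
proof -
  have X: "X = (\<lambda>i j. \<Sum>a\<in>UNIV. \<Sum>b\<in>UNIV. X a b * E a b i j)"
    by (simp add: E_def if_conj_split)
  have "N (\<lambda>i j. \<Sum>a\<in>UNIV. \<Sum>b\<in>UNIV. X a b * E a b i j) =
        (\<lambda>p q. \<Sum>a\<in>UNIV. N (\<lambda>i j. \<Sum>b\<in>UNIV. X a b * E a b i j) p q)"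
    by (rule lin_sum[OF assms]) simp
  also have "\<dots> = (\<lambda>p q. \<Sum>a\<in>UNIV. \<Sum>b\<in>UNIV. N (\<lambda>i j. X a b * E a b i j) p q)"
  proof -
    have "N (\<lambda>i j. \<Sum>b\<in>UNIV. X a b * E a b i j) = (\<lambda>p q. \<Sum>b\<in>UNIV. N (\<lambda>i j. X a b * E a b i j) p q)" for a
      using lin_sum[OF assms, of UNIV "\<lambda>b i j. X a b * E a b i j"] by simp
    then show ?thesis by simp
  qed
  also have "\<dots> = kmap (\<lambda>i i'. N (E i i')) X"
    unfolding kmap_def using lin_scale[OF assms] by simp
  finally show ?thesis using X by metis
qed

lemma lin_kmap: "lin_map (kmap K)"
  unfolding lin_map_def kmap_def
  by (simp add: algebra_simps sum.distrib sum_distrib_left)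

lemma ext_id_kmap:
  "ext_id (kmap K) Y = (\<lambda>(p,r) (q,r'). \<Sum>i\<in>UNIV. \<Sum>i'\<in>UNIV. Y (i,r) (i',r') * K i i' p q)"
  unfolding ext_id_def kmap_def by simp

lemma kernel_cp:
  fixes K :: "('i::finite) \<Rightarrow> 'i \<Rightarrow> ('o::finite) op" and Y :: "('i \<times> ('r::finite)) op"
  assumes KP: "psd (\<lambda>(p,i) (q,i'). K i i' p q)" and YP: "psd Y"
  shows "psd (ext_id (kmap K) Y)"
proof -
  obtain V :: "'i \<times> 'r \<Rightarrow> 'i \<times> 'r \<Rightarrow> complex" where V: "\<And>a b. Y a b = (\<Sum>k\<in>UNIV. V k a * cnj (V k b))"
    using psd_decomp[OF YP] by blast
  define T where "T k = (\<lambda>(q::'o, i'::'i) (q0::'o, r'::'r). if q = q0 then cnj (V k (i',r')) else 0)" for k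
  have eq: "ext_id (kmap K) Y = (\<lambda>z z'. \<Sum>k\<in>UNIV. \<Sum>x\<in>UNIV. \<Sum>x'\<in>UNIV.
      cnj (T k x z) * (\<lambda>(p,i) (q,i'). K i i' p q) x x' * T k x' z')"
  proof (intro ext)
    fix z z' :: "'o \<times> 'r"
    obtain p r where z: "z = (p,r)" by (cases z)
    obtain q r' where z': "z' = (q,r')" by (cases z')
    have "(\<Sum>k\<in>UNIV. \<Sum>x\<in>UNIV. \<Sum>x'\<in>UNIV.
      cnj (T k x z) * (\<lambda>(p,i) (q,i'). K i i' p q) x x' * T k x' z') =
      (\<Sum>k\<in>UNIV. \<Sum>i\<in>UNIV. \<Sum>i'\<in>UNIV. V k (i,r) * K i i' p q * cnj (V k (i',r')))"
      unfolding z z' T_def sum_pair_UNIV by (simp add: sum.swap[of _ "UNIV::'o set"])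
    also have "\<dots> = (\<Sum>i\<in>UNIV. \<Sum>i'\<in>UNIV. Y (i,r) (i',r') * K i i' p q)"
      unfolding V sum_distrib_right
      apply (rule trans[OF sum.swap])
      apply (rule sum.cong[OF refl])
      apply (rule trans[OF sum.swap])
      by (simp add: ac_simps)
    finally show "ext_id (kmap K) Y z z' = (\<Sum>k\<in>UNIV. \<Sum>x\<in>UNIV. \<Sum>x'\<in>UNIV.
      cnj (T k x z) * (\<lambda>(p,i) (q,i'). K i i' p q) x x' * T k x' z')"
      unfolding ext_id_kmap z z' by simp
  qed
  show ?thesis unfolding eq
    by (rule psd_sum) (rule psd_cong[OF KP])
qed



definition Phi :: "('i \<times> 'i) op" where
  "Phi = (\<lambda>(i,r) (i',r'). if i = r \<and> i' = r' then 1 else 0)"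

lemma psd_Phi: "psd (Phi :: (('i::finite) \<times> 'i) op)"
proof -
  have "Phi = (\<lambda>z z'. (\<lambda>(i,r). if i = r then 1 else 0) z * cnj ((\<lambda>(i::'i,r). if i = r then 1 else 0) z'))"
    unfolding Phi_def by (auto simp: fun_eq_iff)
  then show ?thesis using psd_rank1 by metis
qed

lemma ext_id_Phi: "ext_id N Phi = (\<lambda>(p,r) (q,r'). N (E r r') p q)"
  unfolding ext_id_def Phi_def E_def by (simp add: fun_eq_iff)

lemma cp_general:
  fixes N :: "('i::finite) op \<Rightarrow> ('o::finite) op" and Y :: "('i \<times> ('r::finite)) op"
  assumes L: "lin_map N" and C: "compl_pos N" and Y: "psd Y"
  shows "psd (ext_id N Y)"
proof -
  have "psd (ext_id N Phi)"
    using C psd_Phi unfolding compl_pos_def by blast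
  then have KP: "psd (\<lambda>(p,i) (q,i'). N (E i i') p q)"
    unfolding ext_id_Phi .
  have "ext_id N Y = ext_id (kmap (\<lambda>i i'. N (E i i'))) Y"
    unfolding ext_id_def by (subst lin_expand[OF L]) simp
  then show ?thesis using kernel_cp[OF KP Y] by simp
qed

lemma pos_of_cp:
  fixes N :: "('i::finite) op \<Rightarrow> ('o::finite) op"
  assumes L: "lin_map N" and C: "compl_pos N" and X: "psd X"
  shows "psd (N X)"
proof -
  have Y: "psd (\<lambda>(i, _::unit) (i', _::unit). X i i')"
    using psd_reindex[OF X, of "fst :: 'i \<times> unit \<Rightarrow> 'i"] by (simp add: case_prod_beta')
  have "psd (\<lambda>p q. ext_id N (\<lambda>(i, _::unit) (i', _::unit). X i i') (p,()) (q,()))"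
    using psd_reindex[OF cp_general[OF L C Y], of "\<lambda>p. (p,())"] by simp
  then show ?thesis unfolding ext_id_def by simp
qed

definition chmap :: "((('ahi::finite) \<times> 'aho) \<times> ('bho \<times> ('bhi::finite))) op \<Rightarrow> ('ahi \<times> 'bhi) op \<Rightarrow> ('aho \<times> 'bho) op" where
  "chmap R = kmap (\<lambda>(l,m) (l',m') (a,b) (a',b'). R ((l,a),(b,m)) ((l',a'),(b',m')))"

lemma E_pair: "E (l,m) (l',m') = (\<lambda>(x,y) (x',y'). if x = l \<and> x' = l' \<and> y = m \<and> y' = m' then 1 else 0)"
  by (auto simp: E_def fun_eq_iff)

lemma choi_kernel: "(\<lambda>(l,m) (l',m') (a,b) (a',b'). choi_bip N ((l,a),(b,m)) ((l',a'),(b',m'))) = (\<lambda>i i'. N (E i i'))"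
  by (simp add: fun_eq_iff choi_bip_def E_pair split_paired_All)

lemma lin_chmap: "lin_map N \<Longrightarrow> N = chmap (choi_bip N)"
  unfolding chmap_def choi_kernel by (rule ext) (rule lin_expand)

lemma chmap_kernel_psd:
  assumes "psd R"
  shows "psd (\<lambda>(p,i) (q,i'). (\<lambda>(l,m) (l',m') (a,b) (a',b'). R ((l,a),(b,m)) ((l',a'),(b',m'))) i i' p q)"
proof -
  have "psd (\<lambda>z z'. R ((\<lambda>((a,b),(l,m)). ((l,a),(b,m))) z) ((\<lambda>((a,b),(l,m)). ((l,a),(b,m))) z'))"
    by (rule psd_reindex[OF assms])
  then show ?thesis by (simp add: case_prod_beta')
qed

lemma mid_cp:
  fixes R :: "((('ahi::finite) \<times> ('aho::finite)) \<times> (('bho::finite) \<times> ('bhi::finite))) op"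
    and Y :: "(((('ahi \<times> ('am::finite)) \<times> ('bhi \<times> ('bm::finite)))) \<times> ('r::finite)) op"
  assumes R: "psd R" and Y: "psd Y"
  shows "psd (ext_id (mid_ext (chmap R)) Y)"
proof -
  define Y' where "Y' = (\<lambda>z z'. Y ((\<lambda>((x,y),((m,n),r)). (((x,m),(y,n)),r)) z) ((\<lambda>((x,y),((m,n),r)). (((x,m),(y,n)),r)) z'))"
  have Y': "psd Y'" unfolding Y'_def by (rule psd_reindex[OF Y])
  have P: "psd (ext_id (chmap R) Y')"
    unfolding chmap_def by (rule kernel_cp[OF chmap_kernel_psd[OF R] Y'])
  define g where "g = (\<lambda>(((m::'am,h::'aho),(gg::'bho,n::'bm)),r::'r). ((h,gg),((m,n),r)))"
  have "ext_id (mid_ext (chmap R)) Y = (\<lambda>z z'. ext_id (chmap R) Y' (g z) (g z'))"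
    unfolding ext_id_def mid_ext_def Y'_def g_def
    by (simp add: fun_eq_iff case_prod_beta')
  then show ?thesis using psd_reindex[OF P, of g] by simp
qed

lemma comp_psd:
  fixes A :: "(('ai::finite) \<times> ('bi::finite)) op \<Rightarrow> ((('ahi::finite) \<times> ('am::finite)) \<times> (('bhi::finite) \<times> ('bm::finite))) op"
    and C :: "((('am \<times> ('aho::finite)) \<times> (('bho::finite) \<times> 'bm))) op \<Rightarrow> (('ao::finite) \<times> ('bo::finite)) op"
    and R :: "(('ahi \<times> 'aho) \<times> ('bho \<times> 'bhi)) op"
  assumes LA: "lin_map A" and CA: "compl_pos A" and LC: "lin_map C" and CC: "compl_pos C"
    and R: "psd R"
  shows "psd (choi_bip (superch A C (chmap R)))"
proof -
  define Y0 where "Y0 = ext_id A Phi"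
  have Y0: "psd Y0" using CA psd_Phi unfolding compl_pos_def Y0_def by blast
  define Y1 where "Y1 = ext_id (mid_ext (chmap R)) Y0"
  have Y1: "psd Y1" unfolding Y1_def by (rule mid_cp[OF R Y0])
  define Y2 where "Y2 = ext_id C Y1"
  have Y2: "psd Y2" unfolding Y2_def by (rule cp_general[OF LC CC Y1])
  define f where "f = (\<lambda>((l::'ai,a::'ao),(b::'bo,m::'bi)). ((a,b),(l,m)))"
  have "choi_bip (superch A C (chmap R)) = (\<lambda>z z'. Y2 (f z) (f z'))"
    unfolding Y2_def Y1_def Y0_def f_def ext_id_Phi choi_bip_def superch_def
    by (simp add: fun_eq_iff ext_id_def E_pair case_prod_beta')
  then show ?thesis using psd_reindex[OF Y2, of f] by simp
qed



definition tconj :: "(('a \<times> 'b) op \<Rightarrow> ('c \<times> 'd) op) \<Rightarrow> ('a \<times> 'b) op \<Rightarrow> ('c \<times> 'd) op" where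
  "tconj N = (\<lambda>X. ptrans2 (N (ptrans2 X)))"

lemma ptrans2_ptrans2[simp]: "ptrans2 (ptrans2 X) = X"
  by (simp add: ptrans2_def fun_eq_iff split_paired_All)

lemma ptrans2_choi: "ptrans2 (choi_bip N) = choi_bip (tconj N)"
  by (simp add: choi_bip_def tconj_def ptrans2_def fun_eq_iff split_paired_All conj_ac)

lemma tconj_mid: "tconj (mid_ext G) = mid_ext (tconj G)"
  by (simp add: tconj_def mid_ext_def ptrans2_def fun_eq_iff split_paired_All case_prod_beta')

lemma tconj_superch: "tconj (superch A C G) = superch (tconj A) (tconj C) (tconj G)"
proof -
  have "tconj (superch A C G) X = superch (tconj A) (tconj C) (tconj G) X" for X
  proof -
    have "tconj (superch A C G) X = ptrans2 (C (mid_ext G (A (ptrans2 X))))"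
      by (simp add: tconj_def superch_def)
    also have "\<dots> = tconj C (tconj (mid_ext G) (tconj A X))"
      by (simp add: tconj_def)
    also have "\<dots> = superch (tconj A) (tconj C) (tconj G) X"
      by (simp add: tconj_mid superch_def)
    finally show ?thesis .
  qed
  then show ?thesis by (rule ext)
qed

lemma tconj_chmap: "tconj (chmap R) = chmap (ptrans2 R)"
proof (rule ext)
  fix X
  show "tconj (chmap R) X = chmap (ptrans2 R) X"
    unfolding tconj_def chmap_def kmap_def ptrans2_def
    apply (simp add: fun_eq_iff sum_pair_UNIV)
    apply (intro allI)
    apply (rule sum.cong[OF refl])
    apply (rule trans)
     apply (rule sum.cong[OF refl])
     apply (rule sum.swap)
    apply (rule trans[OF sum.swap])
    apply (rule sum.cong[OF refl])
    by (rule sum.swap)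
qed

lemma lin_ptrans2:
  "ptrans2 (\<lambda>i j. X i j + Y i j) = (\<lambda>p q. ptrans2 X p q + ptrans2 Y p q)"
  "ptrans2 (\<lambda>i j. c * X i j) = (\<lambda>p q. c * ptrans2 X p q)"
  by (auto simp: ptrans2_def fun_eq_iff)

lemma lin_tconj: "lin_map N \<Longrightarrow> lin_map (tconj N)"
  unfolding lin_map_def tconj_def by (simp add: lin_ptrans2)

lemma lin_diff: "lin_map N \<Longrightarrow> N (\<lambda>i j. X i j - Y i j) = (\<lambda>p q. N X p q - N Y p q)"
proof -
  assume L: "lin_map N"
  have "N (\<lambda>i j. X i j - Y i j) = N (\<lambda>i j. X i j + (- 1) * Y i j)" by simp
  also have "\<dots> = (\<lambda>p q. N X p q + N (\<lambda>i j. (- 1) * Y i j) p q)"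
    by (rule lin_add[OF L])
  also have "\<dots> = (\<lambda>p q. N X p q - N Y p q)"
    using lin_scale[OF L, of "-1" Y] by simp
  finally show ?thesis .
qed

lemma chmap_add: "chmap (\<lambda>z z'. R1 z z' + R2 z z') X = (\<lambda>p q. chmap R1 X p q + chmap R2 X p q)"
  unfolding chmap_def kmap_def by (simp add: case_prod_beta' distrib_left sum.distrib fun_eq_iff)

lemma chmap_diff: "chmap (\<lambda>z z'. R1 z z' - R2 z z') X = (\<lambda>p q. chmap R1 X p q - chmap R2 X p q)"
  unfolding chmap_def kmap_def by (simp add: case_prod_beta' right_diff_distrib sum_subtractf fun_eq_iff)

lemma choi_superch_add:
  assumes LC: "lin_map C"
  shows "choi_bip (superch A C (chmap (\<lambda>z z'. R1 z z' + R2 z z'))) =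
    (\<lambda>z z'. choi_bip (superch A C (chmap R1)) z z' + choi_bip (superch A C (chmap R2)) z z')"
proof -
  have m: "mid_ext (chmap (\<lambda>z z'. R1 z z' + R2 z z')) Z = (\<lambda>p q. mid_ext (chmap R1) Z p q + mid_ext (chmap R2) Z p q)" for Z
    unfolding mid_ext_def chmap_add by (simp add: fun_eq_iff split_paired_All)
  show ?thesis
    unfolding choi_bip_def superch_def m lin_add[OF LC]
    by (simp add: fun_eq_iff split_paired_All)
qed

lemma choi_superch_diff:
  assumes LC: "lin_map C"
  shows "choi_bip (superch A C (chmap (\<lambda>z z'. R1 z z' - R2 z z'))) =
    (\<lambda>z z'. choi_bip (superch A C (chmap R1)) z z' - choi_bip (superch A C (chmap R2)) z z')"
proof -
  have m: "mid_ext (chmap (\<lambda>z z'. R1 z z' - R2 z z')) Z = (\<lambda>p q. mid_ext (chmap R1) Z p q - mid_ext (chmap R2) Z p q)" for Z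
    unfolding mid_ext_def chmap_diff by (simp add: fun_eq_iff split_paired_All)
  show ?thesis
    unfolding choi_bip_def superch_def m lin_diff[OF LC]
    by (simp add: fun_eq_iff split_paired_All)
qed



definition nsq :: "(('i::finite) \<Rightarrow> complex) \<Rightarrow> real" where
  "nsq v = (\<Sum>i\<in>UNIV. (cmod (v i))\<^sup>2)"

definition idop :: "('i::finite) op" where
  "idop = (\<lambda>i j. if i = j then 1 else 0)"

lemma cnj_mult_self: "cnj z * z = complex_of_real ((cmod z)\<^sup>2)"
  using complex_norm_square[of z] by (simp add: mult.commute)

lemma bf_idop: "bf idop x y = (\<Sum>i\<in>UNIV. cnj (x i) * y i)"
  unfolding bf_def idop_def by simp

lemma bf_idop_self: "bf idop v v = complex_of_real (nsq v)"
  unfolding bf_idop nsq_def cnj_mult_self by simp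

lemma nsq_nonneg: "nsq v \<ge> 0"
  unfolding nsq_def by (simp add: sum_nonneg)

lemma vec_norm_nsq: "vec_norm v = sqrt (nsq v)"
  unfolding vec_norm_def nsq_def ..

lemma psd_idop: "psd idop"
  unfolding psd_iff bf_idop_self by (simp add: less_eq_complex_def nsq_nonneg)

lemma std_CS: "(cmod (\<Sum>i\<in>UNIV. cnj (x i) * y i))\<^sup>2 \<le> nsq x * nsq y"
  using psd_CS[OF psd_idop, of x y] unfolding bf_idop_self by (simp add: bf_idop)

lemma nsq_scale: "nsq (\<lambda>i. complex_of_real r * v i) = r\<^sup>2 * nsq v"
  unfolding nsq_def by (simp add: norm_mult power_mult_distrib sum_distrib_left)

lemma nsq_component: "(cmod (v i))\<^sup>2 \<le> nsq v"
  unfolding nsq_def by (rule member_le_sum) auto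

lemma op_apply_scale: "op_apply X (\<lambda>i. c * v i) = (\<lambda>i. c * op_apply X v i)"
  unfolding op_apply_def by (simp add: sum_distrib_left mult.left_commute)

lemma nsq_zero: "nsq v = 0 \<Longrightarrow> v = (\<lambda>_. 0)"
proof -
  assume "nsq v = 0"
  then have "\<forall>i\<in>UNIV. (cmod (v i))\<^sup>2 = 0"
    using sum_nonneg_eq_0_iff[of UNIV "\<lambda>i. (cmod (v i))\<^sup>2"] unfolding nsq_def by simp
  then show ?thesis by (simp add: fun_eq_iff)
qed

lemma op_bdd: "bdd_above {vec_norm (op_apply X v) | v. vec_norm v \<le> 1}"
proof -
  define K where "K = (\<Sum>i\<in>UNIV. (\<Sum>j\<in>UNIV. cmod (X i j))\<^sup>2)"
  have "vec_norm (op_apply X v) \<le> sqrt K" if v: "vec_norm v \<le> 1" for v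
  proof -
    have vj: "cmod (v j) \<le> 1" for j
    proof -
      have "nsq v \<le> 1" using v unfolding vec_norm_nsq by simp
      then have "(cmod (v j))\<^sup>2 \<le> 1\<^sup>2" using nsq_component[of v j] by simp
      then show ?thesis by (rule power2_le_imp_le) simp
    qed
    have ci: "cmod (op_apply X v i) \<le> (\<Sum>j\<in>UNIV. cmod (X i j))" for i
    proof -
      have "cmod (op_apply X v i) \<le> (\<Sum>j\<in>UNIV. cmod (X i j * v j))"
        unfolding op_apply_def by (rule norm_sum)
      also have "\<dots> \<le> (\<Sum>j\<in>UNIV. cmod (X i j))"
        by (rule sum_mono) (simp add: norm_mult mult_left_le vj)
      finally show ?thesis .
    qed
    have "nsq (op_apply X v) \<le> K"
      unfolding nsq_def K_def
      by (rule sum_mono) (rule power_mono[OF ci norm_ge_zero])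
    then show ?thesis unfolding vec_norm_nsq by simp
  qed
  then show ?thesis unfolding bdd_above_def by blast
qed

lemma op_norm_nonneg: "0 \<le> op_norm_inf X"
proof -
  have "vec_norm (op_apply X (\<lambda>_. 0)) \<in> {vec_norm (op_apply X v) | v. vec_norm v \<le> 1}"
    by (auto simp: vec_norm_def)
  then have "vec_norm (op_apply X (\<lambda>_. 0)) \<le> op_norm_inf X"
    unfolding op_norm_inf_def by (rule cSup_upper[OF _ op_bdd])
  moreover have "vec_norm (op_apply X (\<lambda>_. 0)) = 0" by (simp add: vec_norm_def op_apply_def)
  ultimately show ?thesis by simp
qed

lemma op_norm_upper: "vec_norm v \<le> 1 \<Longrightarrow> vec_norm (op_apply X v) \<le> op_norm_inf X"
  unfolding op_norm_inf_def by (rule cSup_upper[OF _ op_bdd]) blast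

lemma op_norm_bound: "vec_norm (op_apply X v) \<le> op_norm_inf X * vec_norm v"
proof (cases "nsq v = 0")
  case True
  then have "v = (\<lambda>_. 0)" by (rule nsq_zero)
  then show ?thesis by (simp add: vec_norm_def op_apply_def)
next
  case False
  then have np: "nsq v > 0" using nsq_nonneg[of v] by simp
  define n where "n = vec_norm v"
  have n0: "n > 0" unfolding n_def vec_norm_nsq using np by simp
  define u where "u = (\<lambda>i. complex_of_real (1 / n) * v i)"
  have "vec_norm u = (1 / n) * n"
    unfolding u_def vec_norm_nsq nsq_scale n_def using n0
    by (simp add: real_sqrt_mult vec_norm_nsq n_def)
  then have "vec_norm u \<le> 1" using n0 by simp
  then have "vec_norm (op_apply X u) \<le> op_norm_inf X" by (rule op_norm_upper)
  moreover have "vec_norm (op_apply X u) = (1 / n) * vec_norm (op_apply X v)"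
    unfolding u_def op_apply_scale vec_norm_nsq nsq_scale using n0
    by (simp add: real_sqrt_mult)
  ultimately have "vec_norm (op_apply X v) / n \<le> op_norm_inf X" by simp
  then show ?thesis using n0 unfolding n_def[symmetric] by (simp add: divide_le_eq)
qed

lemma op_norm_le:
  assumes "\<And>v. vec_norm v \<le> 1 \<Longrightarrow> vec_norm (op_apply X v) \<le> c"
  shows "op_norm_inf X \<le> c"
  unfolding op_norm_inf_def
proof (rule cSup_least)
  have "vec_norm (\<lambda>_::'a. 0::complex) \<le> 1" by (simp add: vec_norm_def)
  then show "{vec_norm (op_apply X v) |v. vec_norm v \<le> 1} \<noteq> {}" by blast
next
  fix x assume "x \<in> {vec_norm (op_apply X v) |v. vec_norm v \<le> 1}"
  then show "x \<le> c" using assms by blast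
qed

lemma op_norm_diag: "cmod (X i i) \<le> op_norm_inf X"
proof -
  have n1: "vec_norm (dl i) = 1"
  proof -
    have "(\<lambda>j. (cmod (dl i j))\<^sup>2) = (\<lambda>j. if j = i then 1 else 0)" by (auto simp: dl_def fun_eq_iff)
    then have "(\<Sum>j\<in>UNIV. (cmod (dl i j))\<^sup>2) = (\<Sum>j\<in>UNIV. if j = i then 1 else 0)" by metis
    then show ?thesis unfolding vec_norm_def by simp
  qed
  have "op_apply X (dl i) = (\<lambda>j. X j i)" unfolding op_apply_def dl_def by simp
  then have "(cmod (X i i))\<^sup>2 \<le> nsq (op_apply X (dl i))" using nsq_component[of "op_apply X (dl i)" i] by simp
  then have "cmod (X i i) \<le> vec_norm (op_apply X (dl i))" unfolding vec_norm_nsq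
    by (simp add: real_le_rsqrt)
  also have "\<dots> \<le> op_norm_inf X" using op_norm_upper[of "dl i" X] n1 by simp
  finally show ?thesis .
qed

lemma bf_op_apply: "bf X x y = (\<Sum>i\<in>UNIV. cnj (x i) * op_apply X y i)"
  unfolding bf_def op_apply_def by (simp add: sum_distrib_left mult.assoc)

lemma bf_cI_minus: "bf (\<lambda>i j. complex_of_real c * idop i j - X i j) w w = complex_of_real (c * nsq w) - bf X w w"
proof -
  have "bf (\<lambda>i j. complex_of_real c * idop i j) w w = complex_of_real c * bf idop w w"
    unfolding bf_def by (simp add: sum_distrib_left mult.assoc mult.left_commute)
  then show ?thesis using bf_diff[of "\<lambda>i j. complex_of_real c * idop i j" X w] bf_idop_self[of w] by simp
qed

lemma psd_cI_minus_iff: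
  assumes "psd X"
  shows "psd (\<lambda>i j. complex_of_real c * idop i j - X i j) \<longleftrightarrow> (\<forall>w. Re (bf X w w) \<le> c * nsq w)"
  using psd_bf_Im[OF assms] unfolding psd_iff bf_cI_minus by (simp add: less_eq_complex_def)

lemma psd_norm_bound:
  assumes P: "psd P"
  shows "psd (\<lambda>i j. complex_of_real (op_norm_inf P) * idop i j - P i j)"
  unfolding psd_cI_minus_iff[OF P]
proof
  fix w
  have "Re (bf P w w) \<le> cmod (bf P w w)" by (rule complex_Re_le_cmod)
  also have "(cmod (bf P w w))\<^sup>2 \<le> nsq w * nsq (op_apply P w)"
    unfolding bf_op_apply by (rule std_CS)
  then have "cmod (bf P w w) \<le> vec_norm w * vec_norm (op_apply P w)"
    unfolding vec_norm_nsq by (metis real_le_rsqrt real_sqrt_mult)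
  also have "\<dots> \<le> vec_norm w * (op_norm_inf P * vec_norm w)"
    by (rule mult_left_mono[OF op_norm_bound]) (simp add: vec_norm_nsq nsq_nonneg)
  also have "\<dots> = op_norm_inf P * nsq w"
    unfolding vec_norm_nsq using nsq_nonneg[of w] by (simp add: power2_eq_square[symmetric] mult.left_commute)
  finally show "Re (bf P w w) \<le> op_norm_inf P * nsq w" .
qed

lemma op_norm_from_psd:
  fixes G :: "('i::finite) op"
  assumes G: "psd G" and GC: "psd (\<lambda>i j. complex_of_real c * idop i j - G i j)" and c: "c \<ge> 0"
  shows "op_norm_inf G \<le> c"
proof (rule op_norm_le)
  fix v :: "'i \<Rightarrow> complex" assume v: "vec_norm v \<le> 1"
  have B: "Re (bf G w w) \<le> c * nsq w" for w using GC unfolding psd_cI_minus_iff[OF G] by blast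
  define u where "u = op_apply G v"
  have uu: "bf G u v = complex_of_real (nsq u)"
  proof -
    have "bf G u v = (\<Sum>i\<in>UNIV. cnj (u i) * u i)" unfolding bf_op_apply u_def by simp
    also have "\<dots> = bf idop u u" by (simp add: bf_idop)
    finally show ?thesis using bf_idop_self[of u] by simp
  qed
  have "(nsq u)\<^sup>2 \<le> Re (bf G u u) * Re (bf G v v)"
    using psd_CS[OF G, of u v] unfolding uu by simp
  also have "\<dots> \<le> (c * nsq u) * (c * nsq v)"
    by (rule mult_mono[OF B B]) (auto simp: psd_bf_Re[OF G] c nsq_nonneg)
  finally have I: "(nsq u)\<^sup>2 \<le> (c * nsq u) * (c * nsq v)" .
  have nv: "nsq v \<le> 1" using v unfolding vec_norm_nsq by simp
  have "nsq u \<le> c\<^sup>2"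
  proof (cases "nsq u = 0")
    case True then show ?thesis by simp
  next
    case False
    then have np: "nsq u > 0" using nsq_nonneg[of u] by simp
    have "nsq u * nsq u \<le> nsq u * (c\<^sup>2 * nsq v)" using I by (simp add: power2_eq_square mult.left_commute mult.commute)
    then have "nsq u \<le> c\<^sup>2 * nsq v" using np by simp
    also have "\<dots> \<le> c\<^sup>2" using nv by (simp add: mult_left_le)
    finally show ?thesis .
  qed
  then show "vec_norm (op_apply G v) \<le> c"
    unfolding u_def[symmetric] vec_norm_nsq using c by (simp add: real_sqrt_le_iff real_le_lsqrt)
qed



definition blk :: "((('ahi::finite) \<times> ('am::finite)) \<times> (('bhi::finite) \<times> ('bm::finite))) op \<Rightarrow> 'am \<Rightarrow> 'bm \<Rightarrow> ('ahi \<times> 'bhi) op" where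
  "blk Z m n = (\<lambda>(x,y) (x',y'). Z ((x,m),(y,n)) ((x',m),(y',n)))"

definition pr :: "('i::finite) op \<Rightarrow> 'i op \<Rightarrow> complex" where
  "pr X P = (\<Sum>i\<in>UNIV. \<Sum>i'\<in>UNIV. X i i' * P i i')"

lemma trace_pair: "trace_op (X :: (('a::finite) \<times> ('b::finite)) op) = (\<Sum>a\<in>UNIV. \<Sum>b\<in>UNIV. X (a,b) (a,b))"
  unfolding trace_op_def by (simp add: sum_pair_UNIV)

lemma T1: "trace_op (chmap Q X) = pr X (ptrace_AB Q)"
proof -
  have "trace_op (chmap Q X) = (\<Sum>z\<in>UNIV. \<Sum>i\<in>UNIV. \<Sum>i'\<in>UNIV. X i i' *
       (\<lambda>(l,m) (l',m') (a,b) (a',b'). Q ((l,a),(b,m)) ((l',a'),(b',m'))) i i' z z)"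
    unfolding trace_op_def chmap_def kmap_def ..
  also have "\<dots> = (\<Sum>i\<in>UNIV. \<Sum>i'\<in>UNIV. \<Sum>z\<in>UNIV. X i i' *
       (\<lambda>(l,m) (l',m') (a,b) (a',b'). Q ((l,a),(b,m)) ((l',a'),(b',m'))) i i' z z)"
    apply (rule trans[OF sum.swap])
    apply (rule sum.cong[OF refl])
    by (rule sum.swap)
  also have "\<dots> = pr X (ptrace_AB Q)"
    unfolding pr_def ptrace_AB_def
    by (simp add: sum_distrib_left[symmetric] sum_pair_UNIV case_prod_beta')
  finally show ?thesis .
qed

lemma T2: "trace_op (mid_ext G Z) = (\<Sum>m\<in>UNIV. \<Sum>n\<in>UNIV. trace_op (G (blk Z m n)))"
proof -
  have "trace_op (mid_ext G Z) = (\<Sum>m\<in>UNIV. \<Sum>h\<in>UNIV. \<Sum>g\<in>UNIV. \<Sum>n\<in>UNIV. G (blk Z m n) (h,g) (h,g))"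
    unfolding trace_op_def sum_pair_UNIV mid_ext_def blk_def by simp
  also have "\<dots> = (\<Sum>m\<in>UNIV. \<Sum>n\<in>UNIV. \<Sum>h\<in>UNIV. \<Sum>g\<in>UNIV. G (blk Z m n) (h,g) (h,g))"
    apply (rule sum.cong[OF refl])
    apply (rule trans)
     apply (rule sum.cong[OF refl])
     apply (rule sum.swap)
    by (rule sum.swap)
  also have "\<dots> = (\<Sum>m\<in>UNIV. \<Sum>n\<in>UNIV. trace_op (G (blk Z m n)))"
    unfolding trace_pair ..
  finally show ?thesis .
qed

lemma T3: "trace_op Z = (\<Sum>m\<in>UNIV. \<Sum>n\<in>UNIV. trace_op (blk Z m n))"
proof -
  have "trace_op Z = (\<Sum>x\<in>UNIV. \<Sum>m\<in>UNIV. \<Sum>y\<in>UNIV. \<Sum>n\<in>UNIV. Z ((x,m),(y,n)) ((x,m),(y,n)))"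
    unfolding trace_op_def sum_pair_UNIV by simp
  also have "\<dots> = (\<Sum>m\<in>UNIV. \<Sum>n\<in>UNIV. \<Sum>x\<in>UNIV. \<Sum>y\<in>UNIV. Z ((x,m),(y,n)) ((x,m),(y,n)))"
    apply (rule trans[OF sum.swap])
    apply (rule sum.cong[OF refl])
    apply (rule trans)
     apply (rule sum.cong[OF refl])
     apply (rule sum.swap)
    by (rule sum.swap)
  also have "\<dots> = (\<Sum>m\<in>UNIV. \<Sum>n\<in>UNIV. trace_op (blk Z m n))"
    unfolding trace_pair blk_def by simp
  finally show ?thesis .
qed

lemma T4: "psd Z \<Longrightarrow> psd (blk Z m n)"
proof -
  assume Z: "psd Z"
  have "blk Z m n = (\<lambda>z z'. Z ((\<lambda>(x,y). ((x,m),(y,n))) z) ((\<lambda>(x,y). ((x,m),(y,n))) z'))"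
    unfolding blk_def by (simp add: fun_eq_iff split_paired_All)
  then show ?thesis using psd_reindex[OF Z] by metis
qed

lemma T5:
  fixes X :: "('i::finite) op"
  assumes X: "psd X" and P: "psd P"
  shows "0 \<le> pr X P"
proof -
  obtain V :: "'i \<Rightarrow> 'i \<Rightarrow> complex" where V: "\<And>i j. X i j = (\<Sum>k\<in>UNIV. V k i * cnj (V k j))"
    using psd_decomp[OF X] by blast
  have "pr X P = (\<Sum>i\<in>UNIV. \<Sum>i'\<in>UNIV. \<Sum>k\<in>UNIV. V k i * cnj (V k i') * P i i')"
    unfolding pr_def V by (simp add: sum_distrib_right)
  also have "\<dots> = (\<Sum>k\<in>UNIV. \<Sum>i\<in>UNIV. \<Sum>i'\<in>UNIV. V k i * cnj (V k i') * P i i')"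
    apply (rule trans)
     apply (rule sum.cong[OF refl])
     apply (rule sum.swap)
    by (rule sum.swap)
  also have "\<dots> = (\<Sum>k\<in>UNIV. bf P (\<lambda>i. cnj (V k i)) (\<lambda>i. cnj (V k i)))"
    unfolding bf_def by (simp add: mult_ac)
  finally show ?thesis using psd_bf_nonneg[OF P] by (simp add: sum_nonneg)
qed

lemma T6: "pr X (\<lambda>i j. complex_of_real c * idop i j - P i j) = complex_of_real c * trace_op X - pr X P"
  unfolding pr_def trace_op_def idop_def
  by (simp add: right_diff_distrib sum_subtractf sum_distrib_left mult.commute)

lemma T7: "psd Q \<Longrightarrow> psd (ptrace_AB Q)"
proof -
  assume Q: "psd Q"
  have "ptrace_AB Q = (\<lambda>z z'. \<Sum>a\<in>UNIV. \<Sum>b\<in>UNIV.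
      Q ((\<lambda>(l,m). ((l,a),(b,m))) z) ((\<lambda>(l,m). ((l,a),(b,m))) z'))"
    unfolding ptrace_AB_def by (simp add: fun_eq_iff split_paired_All)
  moreover have "psd (\<lambda>z z'. \<Sum>a\<in>UNIV. \<Sum>b\<in>UNIV.
      Q ((\<lambda>(l,m). ((l,a),(b,m))) z) ((\<lambda>(l,m). ((l,a),(b,m))) z'))"
    by (intro psd_sum psd_reindex[OF Q])
  ultimately show ?thesis by simp
qed

definition blk2 :: "((('ahi) \<times> ('am)) \<times> (('bhi) \<times> ('bm))) op \<Rightarrow> 'am \<Rightarrow> 'bm \<Rightarrow> 'am \<Rightarrow> 'bm \<Rightarrow> ('ahi \<times> 'bhi) op" where
  "blk2 Z m n m' n' = (\<lambda>(x,y) (x',y'). Z ((x,m),(y,n)) ((x',m'),(y',n')))"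

lemma mid_ext_blk2: "mid_ext G Z = (\<lambda>((m,h),(g,n)) ((m',h'),(g',n')). G (blk2 Z m n m' n') (h,g) (h',g'))"
  unfolding mid_ext_def blk2_def ..

lemma blk2_add: "blk2 (\<lambda>i j. X i j + Y i j) m n m' n' = (\<lambda>i j. blk2 X m n m' n' i j + blk2 Y m n m' n' i j)"
  unfolding blk2_def by (simp add: fun_eq_iff split_paired_All)

lemma blk2_scale: "blk2 (\<lambda>i j. c * X i j) m n m' n' = (\<lambda>i j. c * blk2 X m n m' n' i j)"
  unfolding blk2_def by (simp add: fun_eq_iff split_paired_All)

lemma lin_mid: "lin_map G \<Longrightarrow> lin_map (mid_ext G)"
proof -
  assume L: "lin_map G"
  have "mid_ext G (\<lambda>i j. X i j + Y i j) = (\<lambda>p q. mid_ext G X p q + mid_ext G Y p q)" for X Y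
    by (simp add: mid_ext_blk2 blk2_add lin_add[OF L] fun_eq_iff split_paired_All)
  moreover have "mid_ext G (\<lambda>i j. c * X i j) = (\<lambda>p q. c * mid_ext G X p q)" for c X
    by (simp add: mid_ext_blk2 blk2_scale lin_scale[OF L] fun_eq_iff split_paired_All)
  ultimately show ?thesis unfolding lin_map_def by blast
qed

lemma lin_superch: "lin_map A \<Longrightarrow> lin_map C \<Longrightarrow> lin_map G \<Longrightarrow> lin_map (superch A C G)"
proof -
  assume LA: "lin_map A" and LC: "lin_map C" and LG: "lin_map G"
  have LM: "lin_map (mid_ext G)" by (rule lin_mid[OF LG])
  show ?thesis
    unfolding lin_map_def superch_def
    by (simp add: lin_add[OF LA] lin_scale[OF LA] lin_add[OF LM] lin_scale[OF LM] lin_add[OF LC] lin_scale[OF LC])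
qed

lemma ptrace_choi: "ptrace_AB (choi_bip F) = (\<lambda>L L'. trace_op (F (E L L')))"
  unfolding ptrace_AB_def choi_bip_def
  by (simp add: fun_eq_iff split_paired_All E_pair trace_pair)

lemma trace_kmap: "trace_op (kmap K W) = (\<Sum>L\<in>UNIV. \<Sum>L'\<in>UNIV. W L L' * trace_op (K L L'))"
proof -
  have "trace_op (kmap K W) = (\<Sum>p\<in>UNIV. \<Sum>L\<in>UNIV. \<Sum>L'\<in>UNIV. W L L' * K L L' p p)"
    unfolding trace_op_def kmap_def ..
  also have "\<dots> = (\<Sum>L\<in>UNIV. \<Sum>L'\<in>UNIV. \<Sum>p\<in>UNIV. W L L' * K L L' p p)"
    apply (rule trans[OF sum.swap])
    apply (rule sum.cong[OF refl])
    by (rule sum.swap)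
  finally show ?thesis unfolding trace_op_def by (simp add: sum_distrib_left)
qed



lemma lin_chmap': "lin_map (chmap R)"
  unfolding chmap_def by (rule lin_kmap)

lemma pr_le_trace:
  assumes X: "psd X" and PC: "psd (\<lambda>i j. complex_of_real c * idop i j - P i j)"
  shows "pr X P \<le> complex_of_real c * trace_op X"
proof -
  have "0 \<le> pr X (\<lambda>i j. complex_of_real c * idop i j - P i j)" by (rule T5[OF X PC])
  then show ?thesis unfolding T6 by simp
qed

lemma trace_W: "trace_op (\<lambda>L L'. cnj (w L) * w L') = complex_of_real (nsq w)"
  unfolding trace_op_def bf_idop_self[symmetric] bf_idop ..

lemma psd_W: "psd (\<lambda>L L'. cnj (w L) * w L')"
  using psd_rank1[of "\<lambda>L. cnj (w L)"] by simp

lemma norm_Qprime: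
  fixes Ppre :: "(('ai::finite) \<times> ('bi::finite)) op \<Rightarrow> ((('ahi::finite) \<times> ('am::finite)) \<times> (('bhi::finite) \<times> ('bm::finite))) op"
    and Ppost :: "((('am \<times> ('aho::finite)) \<times> (('bho::finite) \<times> 'bm))) op \<Rightarrow> (('ao::finite) \<times> ('bo::finite)) op"
    and Q :: "(('ahi \<times> 'aho) \<times> ('bho \<times> 'bhi)) op"
  assumes LA: "lin_map Ppre" and CA: "compl_pos Ppre" and TA: "trace_pres Ppre"
    and LC: "lin_map Ppost" and TC: "trace_pres Ppost" and Q: "psd Q"
  shows "op_norm_inf (ptrace_AB (choi_bip (superch Ppre Ppost (chmap Q)))) \<le> op_norm_inf (ptrace_AB Q)"
proof -
  define c where "c = op_norm_inf (ptrace_AB Q)"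
  define P where "P = ptrace_AB Q"
  define Fq where "Fq = superch Ppre Ppost (chmap Q)"
  define Gm where "Gm = ptrace_AB (choi_bip Fq)"
  have c0: "c \<ge> 0" by (simp add: c_def op_norm_nonneg)
  have PP: "psd P" by (simp add: P_def T7 Q)
  have PC: "psd (\<lambda>i j. complex_of_real c * idop i j - P i j)"
    unfolding c_def P_def by (rule psd_norm_bound[OF T7[OF Q]])
  have LF: "lin_map Fq" unfolding Fq_def by (rule lin_superch[OF LA LC lin_chmap'])
  have key: "0 \<le> bf Gm w w \<and> bf Gm w w \<le> complex_of_real (c * nsq w)" for w
  proof -
    define W where "W = (\<lambda>L L'. cnj (w L) * w L')"
    define Z where "Z = Ppre W"
    have ZP: "psd Z" unfolding Z_def W_def by (rule pos_of_cp[OF LA CA psd_W])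
    have "bf Gm w w = (\<Sum>L\<in>UNIV. \<Sum>L'\<in>UNIV. W L L' * trace_op (Fq (E L L')))"
      unfolding bf_def Gm_def ptrace_choi W_def by (simp add: mult_ac)
    also have "\<dots> = trace_op (Fq W)"
      by (subst lin_expand[OF LF]) (simp add: trace_kmap)
    also have "\<dots> = trace_op (mid_ext (chmap Q) Z)"
      using TC unfolding trace_pres_def Fq_def superch_def Z_def by simp
    also have "\<dots> = (\<Sum>m\<in>UNIV. \<Sum>n\<in>UNIV. pr (blk Z m n) P)"
      unfolding T2 T1 P_def ..
    finally have e: "bf Gm w w = (\<Sum>m\<in>UNIV. \<Sum>n\<in>UNIV. pr (blk Z m n) P)" .
    have "0 \<le> (\<Sum>m\<in>UNIV. \<Sum>n\<in>UNIV. pr (blk Z m n) P)"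
      by (intro sum_nonneg T5[OF T4[OF ZP] PP])
    moreover have "(\<Sum>m\<in>UNIV. \<Sum>n\<in>UNIV. pr (blk Z m n) P) \<le>
        (\<Sum>m\<in>UNIV. \<Sum>n\<in>UNIV. complex_of_real c * trace_op (blk Z m n))"
      by (intro sum_mono pr_le_trace[OF T4[OF ZP] PC])
    moreover have "(\<Sum>m\<in>UNIV. \<Sum>n\<in>UNIV. complex_of_real c * trace_op (blk Z m n)) = complex_of_real (c * nsq w)"
    proof -
      have "(\<Sum>m\<in>UNIV. \<Sum>n\<in>UNIV. complex_of_real c * trace_op (blk Z m n)) = complex_of_real c * trace_op Z"
        unfolding T3[of Z] by (simp add: sum_distrib_left)
      also have "trace_op Z = trace_op W" using TA unfolding trace_pres_def Z_def by simp
      also have "\<dots> = complex_of_real (nsq w)" unfolding W_def by (rule trace_W)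
      finally show ?thesis by simp
    qed
    ultimately show ?thesis unfolding e by simp
  qed
  have GP: "psd Gm" unfolding psd_iff using key by blast
  have GC: "psd (\<lambda>i j. complex_of_real c * idop i j - Gm i j)"
    unfolding psd_cI_minus_iff[OF GP]
  proof
    fix w show "Re (bf Gm w w) \<le> c * nsq w" using key[of w] by (simp add: less_eq_complex_def)
  qed
  have "op_norm_inf Gm \<le> c" by (rule op_norm_from_psd[OF GP GC c0])
  then show ?thesis unfolding Gm_def Fq_def c_def .
qed

lemma trace_pres_superch:
  assumes "trace_pres A" "trace_pres C" "trace_pres G"
  shows "trace_pres (superch A C G)"
  unfolding trace_pres_def superch_def
proof
  fix X
  have "trace_op (C (mid_ext G (A X))) = trace_op (mid_ext G (A X))"
    using assms(2) unfolding trace_pres_def by simp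
  also have "\<dots> = trace_op (A X)"
    unfolding T2 T3[of "A X"] using assms(3) unfolding trace_pres_def by simp
  also have "\<dots> = trace_op X" using assms(1) unfolding trace_pres_def by simp
  finally show "trace_op (C (mid_ext G (A X))) = trace_op X" .
qed

lemma trace_E: "trace_op (E L L) = 1"
  unfolding trace_op_def E_def by simp

lemma ptrans2_diag: "ptrans2 X z z = X z z"
  by (cases z) (simp add: ptrans2_def)

lemma lower1:
  fixes F :: "(('ai::finite) \<times> ('bi::finite)) op \<Rightarrow> (('ao::finite) \<times> ('bo::finite)) op"
    and Q' :: "(('ai \<times> 'ao) \<times> ('bo \<times> 'bi)) op"
  assumes TF: "trace_pres F" and D: "psd (\<lambda>i j. ptrans2 Q' i j - ptrans2 (choi_bip F) i j)"
  shows "1 \<le> op_norm_inf (ptrace_AB Q')"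
proof -
  obtain l0 :: 'ai and m0 :: 'bi where True by simp
  have dz: "0 \<le> Q' z z - choi_bip F z z" for z
    using psd_bf_nonneg[OF D, of "dl z"] unfolding bf_dl_dl ptrans2_diag .
  have "ptrace_AB Q' (l0,m0) (l0,m0) - ptrace_AB (choi_bip F) (l0,m0) (l0,m0) =
      (\<Sum>a\<in>UNIV. \<Sum>b\<in>UNIV. Q' ((l0,a),(b,m0)) ((l0,a),(b,m0)) - choi_bip F ((l0,a),(b,m0)) ((l0,a),(b,m0)))"
    unfolding ptrace_AB_def by (simp add: sum_subtractf)
  also have "\<dots> \<ge> 0" by (intro sum_nonneg dz)
  finally have g: "0 \<le> ptrace_AB Q' (l0,m0) (l0,m0) - ptrace_AB (choi_bip F) (l0,m0) (l0,m0)" .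
  have "ptrace_AB (choi_bip F) (l0,m0) (l0,m0) = 1"
    unfolding ptrace_choi using TF trace_E unfolding trace_pres_def by simp
  then have "1 \<le> ptrace_AB Q' (l0,m0) (l0,m0)" using g by simp
  then have "1 \<le> Re (ptrace_AB Q' (l0,m0) (l0,m0))" by (simp add: less_eq_complex_def)
  also have "\<dots> \<le> cmod (ptrace_AB Q' (l0,m0) (l0,m0))" by (rule complex_Re_le_cmod)
  also have "\<dots> \<le> op_norm_inf (ptrace_AB Q')" by (rule op_norm_diag)
  finally show ?thesis .
qed

lemma choi_psd:
  fixes N :: "(('ai::finite) \<times> ('bi::finite)) op \<Rightarrow> (('ao::finite) \<times> ('bo::finite)) op"
  assumes C: "compl_pos N"
  shows "psd (choi_bip N)"
proof -
  have Y: "psd (ext_id N Phi)" using C psd_Phi unfolding compl_pos_def by blast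
  define f where "f = (\<lambda>((l::'ai,a::'ao),(b::'bo,m::'bi)). ((a,b),(l,m)))"
  have "choi_bip N = (\<lambda>z z'. ext_id N Phi (f z) (f z'))"
    unfolding f_def ext_id_Phi choi_bip_def
    by (simp add: fun_eq_iff E_pair split_paired_All)
  then show ?thesis using psd_reindex[OF Y, of f] by simp
qed

lemma herm_ptrans2:
  assumes h: "herm X" shows "herm (ptrans2 X)"
  unfolding herm_def
proof (intro allI)
  fix i j :: "'a \<times> 'b"
  obtain x y where i: "i = (x,y)" by (cases i)
  obtain x' y' where j: "j = (x',y')" by (cases j)
  have "X (x',y) (x,y') = cnj (X (x,y') (x',y))" using h unfolding herm_def by blast
  then show "ptrans2 X j i = cnj (ptrans2 X i j)" unfolding i j ptrans2_def by simp
qed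

lemma bf_herm_real: "herm H \<Longrightarrow> Im (bf H w w) = 0"
proof -
  assume "herm H"
  then have "bf H w w = cnj (bf H w w)" by (rule bf_herm_swap)
  then have "Im (bf H w w) = Im (cnj (bf H w w))" by simp
  then show ?thesis by simp
qed

lemma bf_bound: "cmod (bf H w w) \<le> (\<Sum>i\<in>UNIV. \<Sum>j\<in>UNIV. cmod (H i j)) * nsq w"
proof -
  have wi: "cmod (w i) * cmod (w j) \<le> nsq w" for i j
  proof -
    have a: "cmod (w i) \<le> sqrt (nsq w)" using nsq_component[of w i] by (simp add: real_le_rsqrt)
    have b: "cmod (w j) \<le> sqrt (nsq w)" using nsq_component[of w j] by (simp add: real_le_rsqrt)
    have "cmod (w i) * cmod (w j) \<le> sqrt (nsq w) * sqrt (nsq w)"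
      by (rule mult_mono[OF a b]) (auto simp: nsq_nonneg)
    then show ?thesis using nsq_nonneg[of w] by simp
  qed
  have "cmod (bf H w w) \<le> (\<Sum>i\<in>UNIV. cmod (\<Sum>j\<in>UNIV. cnj (w i) * H i j * w j))"
    unfolding bf_def by (rule norm_sum)
  also have "\<dots> \<le> (\<Sum>i\<in>UNIV. \<Sum>j\<in>UNIV. cmod (cnj (w i) * H i j * w j))"
    by (intro sum_mono norm_sum)
  also have "\<dots> \<le> (\<Sum>i\<in>UNIV. \<Sum>j\<in>UNIV. cmod (H i j) * nsq w)"
  proof (intro sum_mono)
    fix i j
    have "cmod (cnj (w i) * H i j * w j) = cmod (H i j) * (cmod (w i) * cmod (w j))"
      by (simp add: norm_mult)
    also have "\<dots> \<le> cmod (H i j) * nsq w" by (rule mult_left_mono[OF wi]) simp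
    finally show "cmod (cnj (w i) * H i j * w j) \<le> cmod (H i j) * nsq w" .
  qed
  also have "\<dots> = (\<Sum>i\<in>UNIV. \<Sum>j\<in>UNIV. cmod (H i j)) * nsq w"
    by (simp add: sum_distrib_right)
  finally show ?thesis .
qed

lemma ptrans2_idop: "ptrans2 (\<lambda>i j. c * idop i j) = (\<lambda>i j. c * idop i j)"
  unfolding ptrans2_def idop_def by (auto simp: fun_eq_iff)

lemma feasible_exists:
  fixes M :: "(('ahi::finite) \<times> ('bhi::finite)) op \<Rightarrow> (('aho::finite) \<times> ('bho::finite)) op"
  assumes C: "compl_pos M"
  shows "\<exists>Q. psd Q \<and> op_le (op_uminus (ptrans2 Q)) (ptrans2 (choi_bip M)) \<and> op_le (ptrans2 (choi_bip M)) (ptrans2 Q)"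
proof -
  define H where "H = ptrans2 (choi_bip M)"
  have HH: "herm H" unfolding H_def by (rule herm_ptrans2[OF psd_herm[OF choi_psd[OF C]]])
  define c where "c = (\<Sum>i\<in>UNIV. \<Sum>j\<in>UNIV. cmod (H i j))"
  have c0: "c \<ge> 0" unfolding c_def by (simp add: sum_nonneg)
  define Q :: "(('ahi \<times> 'aho) \<times> ('bho \<times> 'bhi)) op" where "Q = (\<lambda>i j. complex_of_real c * idop i j)"
  have bQ: "bf Q w w = complex_of_real (c * nsq w)" for w
    unfolding Q_def using bf_cI_minus[of c "\<lambda>_ _. 0" w] by (simp add: bf_def)
  have QP: "psd Q" unfolding Q_def by (rule psd_scale[OF c0 psd_idop])
  have tQ: "ptrans2 Q = Q" unfolding Q_def by (rule ptrans2_idop)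
  have bnd: "\<bar>Re (bf H w w)\<bar> \<le> c * nsq w" for w
    using bf_bound[of H w] abs_Re_le_cmod[of "bf H w w"] unfolding c_def by linarith
  have "psd (\<lambda>i j. H i j - op_uminus Q i j)"
    unfolding psd_iff op_uminus_def
  proof
    fix w
    have "bf (\<lambda>i j. H i j - - Q i j) w w = bf H w w + bf Q w w"
      using bf_add[of H Q w] by simp
    then show "0 \<le> bf (\<lambda>i j. H i j - - Q i j) w w"
      using bQ bnd[of w] bf_herm_real[OF HH, of w] by (simp add: less_eq_complex_def)
  qed
  moreover have "psd (\<lambda>i j. Q i j - H i j)"
    unfolding psd_iff
  proof
    fix w
    have "bf (\<lambda>i j. Q i j - H i j) w w = bf Q w w - bf H w w" by (rule bf_diff)
    then show "0 \<le> bf (\<lambda>i j. Q i j - H i j) w w"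
      using bQ bnd[of w] bf_herm_real[OF HH, of w] by (simp add: less_eq_complex_def)
  qed
  ultimately have "psd Q \<and> op_le (op_uminus (ptrans2 Q)) H \<and> op_le H (ptrans2 Q)"
    using QP unfolding op_le_def tQ by simp
  then show ?thesis unfolding H_def by (intro exI[where x=Q])
qed



lemma key_pt:
  assumes LA: "lin_map A" and CA: "compl_pos (tconj A)" and LC: "lin_map C" and CC: "compl_pos (tconj C)"
    and R: "psd (ptrans2 R)"
  shows "psd (ptrans2 (choi_bip (superch A C (chmap R))))"
  unfolding ptrans2_choi tconj_superch tconj_chmap
  by (rule comp_psd[OF lin_tconj[OF LA] CA lin_tconj[OF LC] CC R])

lemma ptrans2_add: "ptrans2 (\<lambda>z z'. A z z' + B z z') = (\<lambda>z z'. ptrans2 A z z' + ptrans2 B z z')"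
  by (auto simp: ptrans2_def fun_eq_iff)

lemma ptrans2_diff: "ptrans2 (\<lambda>z z'. A z z' - B z z') = (\<lambda>z z'. ptrans2 A z z' - ptrans2 B z z')"
  by (auto simp: ptrans2_def fun_eq_iff)

theorem mainTheorem10:
  fixes M :: "(('ahi::finite) \<times> ('bhi::finite)) op \<Rightarrow> (('aho::finite) \<times> ('bho::finite)) op"
    and Ppre :: "(('ai::finite) \<times> ('bi::finite)) op \<Rightarrow> (('ahi \<times> ('am::finite)) \<times> ('bhi \<times> ('bm::finite))) op"
    and Ppost :: "(('am \<times> 'aho) \<times> ('bho \<times> 'bm)) op \<Rightarrow> (('ao::finite) \<times> ('bo::finite)) op"
  assumes "qchannel M"
    and "cppt_pres Ppre"
    and "cppt_pres Ppost"
  shows "E_kappa M \<ge> E_kappa (superch Ppre Ppost M)"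
proof -
  have LM: "lin_map M" and CM: "compl_pos M" and TM: "trace_pres M"
    using assms(1) unfolding qchannel_def by auto
  have LA: "lin_map Ppre" and CA: "compl_pos Ppre" and TA: "trace_pres Ppre"
    and CA': "compl_pos (tconj Ppre)"
    using assms(2) unfolding cppt_pres_def qchannel_def tconj_def by auto
  have LC: "lin_map Ppost" and CC: "compl_pos Ppost" and TC: "trace_pres Ppost"
    and CC': "compl_pos (tconj Ppost)"
    using assms(3) unfolding cppt_pres_def qchannel_def tconj_def by auto
  define J where "J = choi_bip M"
  have HM: "M = chmap J" unfolding J_def by (rule lin_chmap[OF LM])
  define F where "F = superch Ppre Ppost M"
  define J' where "J' = choi_bip F"
  have J'eq: "J' = choi_bip (superch Ppre Ppost (chmap J))" unfolding J'_def F_def HM ..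
  define S where "S = {op_norm_inf (ptrace_AB Q) | Q. psd Q \<and> op_le (op_uminus (ptrans2 Q)) (ptrans2 (choi_bip M)) \<and> op_le (ptrans2 (choi_bip M)) (ptrans2 Q)}"
  define S' where "S' = {op_norm_inf (ptrace_AB Q) | Q. psd Q \<and> op_le (op_uminus (ptrans2 Q)) (ptrans2 (choi_bip F)) \<and> op_le (ptrans2 (choi_bip F)) (ptrans2 Q)}"
  have GM: "Gamma_kappa M = Inf S" unfolding Gamma_kappa_def S_def ..
  have GF: "Gamma_kappa F = Inf S'" unfolding Gamma_kappa_def S'_def ..
  have TF: "trace_pres F" unfolding F_def by (rule trace_pres_superch[OF TA TC TM])
  have claim: "\<exists>y\<in>S'. y \<le> x" if x: "x \<in> S" for x
  proof -
    obtain Q where xQ: "x = op_norm_inf (ptrace_AB Q)" and Q: "psd Q"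
      and Q1: "op_le (op_uminus (ptrans2 Q)) (ptrans2 J)" and Q2: "op_le (ptrans2 J) (ptrans2 Q)"
      using x unfolding S_def J_def by blast
    define Q' where "Q' = choi_bip (superch Ppre Ppost (chmap Q))"
    have a: "psd Q'" unfolding Q'_def by (rule comp_psd[OF LA CA LC CC Q])
    have b: "op_le (op_uminus (ptrans2 Q')) (ptrans2 J')"
    proof -
      have R: "psd (ptrans2 (\<lambda>z z'. J z z' + Q z z'))"
        using Q1 unfolding op_le_def op_uminus_def ptrans2_add by simp
      have "ptrans2 (choi_bip (superch Ppre Ppost (chmap (\<lambda>z z'. J z z' + Q z z')))) =
          (\<lambda>i j. ptrans2 J' i j - op_uminus (ptrans2 Q') i j)"
        unfolding choi_superch_add[OF LC] ptrans2_add J'eq Q'_def op_uminus_def by simp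
      then show ?thesis using key_pt[OF LA CA' LC CC' R] unfolding op_le_def by simp
    qed
    have c: "op_le (ptrans2 J') (ptrans2 Q')"
    proof -
      have R: "psd (ptrans2 (\<lambda>z z'. Q z z' - J z z'))"
        using Q2 unfolding op_le_def ptrans2_diff by simp
      have "ptrans2 (choi_bip (superch Ppre Ppost (chmap (\<lambda>z z'. Q z z' - J z z')))) =
          (\<lambda>i j. ptrans2 Q' i j - ptrans2 J' i j)"
        unfolding choi_superch_diff[OF LC] ptrans2_diff J'eq Q'_def by simp
      then show ?thesis using key_pt[OF LA CA' LC CC' R] unfolding op_le_def by simp
    qed
    have d: "op_norm_inf (ptrace_AB Q') \<le> x"
      unfolding xQ Q'_def by (rule norm_Qprime[OF LA CA TA LC TC Q])
    have "op_norm_inf (ptrace_AB Q') \<in> S'"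
      unfolding S'_def using a b c unfolding J'_def by blast
    then show ?thesis using d by blast
  qed
  have Sne: "S \<noteq> {}"
    using feasible_exists[OF CM] unfolding S_def by blast
  then obtain x0 where "x0 \<in> S" by blast
  then have S'ne: "S' \<noteq> {}" using claim by blast
  have low: "1 \<le> y" if yS: "y \<in> S'" for y
  proof -
    obtain Q where yQ: "y = op_norm_inf (ptrace_AB Q)" and "op_le (ptrans2 (choi_bip F)) (ptrans2 Q)"
      using yS unfolding S'_def by blast
    then have "psd (\<lambda>i j. ptrans2 Q i j - ptrans2 (choi_bip F) i j)" unfolding op_le_def by simp
    then show ?thesis unfolding yQ by (rule lower1[OF TF])
  qed
  have bdd: "bdd_below S'" unfolding bdd_below_def using low by blast
  have G1: "1 \<le> Inf S'" by (rule cInf_greatest[OF S'ne low])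
  have G2: "Inf S' \<le> Inf S"
  proof (rule cInf_greatest[OF Sne])
    fix x assume "x \<in> S"
    then obtain y where "y \<in> S'" "y \<le> x" using claim by blast
    then show "Inf S' \<le> x" using cInf_lower[OF _ bdd] by (meson order_trans)
  qed
  have "log 2 (Inf S') \<le> log 2 (Inf S)"
    using G1 G2 by (subst log_le_cancel_iff) auto
  then show ?thesis unfolding E_kappa_def GM GF[unfolded F_def] .
qed

end
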